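(* Let $K\ge1$ and let $A_K,B_K,N_K$ be as defined in the context. Let $T_K=\{s\in S(\theta): \max N_K\le s<\max N_{K+1}\}$ and $T'_K=\{A_K+B_K\theta-s : s\in T_K\}$. Then $T'_K\subseteq S(\theta)$, and the set $C_K=T'_K\cup N_K\cup T_K$ is a block of consecutive terms of $S_\theta$ (i.e. $C_K=S(\theta)\cap[\min C_K,\max C_K]$) which is invariant under $s\mapsto A_K+B_K\theta-s$. In particular the sequence of consecutive differences of the elements of $C_K$ in increasing order is a palindrome.
   Context: Fix an irrational $\theta$ with $1<\theta<2$. Let $S(\theta)=\{i+j\theta : i,j\in\mathbb{N}_0\}$, and let $S_\theta$ be the sequence of its elements in increasing order. Every positive integer $K$ is either $K=\lfloor k\theta\rfloor+k$ or $K=\lfloor k/\theta\rfloor+k$ for a unique integer $k\ge1$ (and not both). In the first case set $(A_K,B_K)=(\lfloor k\theta\rfloor,k)$; in the second case set $(A_K,B_K)=(k,\lfloor k/\theta\rfloor)$. Define $N_K=\{s\in S(\theta): \min(A_K,B_K\theta)\le s\le \max(A_K,B_K\theta)\}$. *)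

theory Defs
  imports Complex_Main
begin

definition Sth :: "real \<Rightarrow> real set" where
  "Sth \<theta> = {real i + real j * \<theta> | i j :: nat. True}"

definition first_kind :: "real \<Rightarrow> nat \<Rightarrow> bool" where
  "first_kind \<theta> K = (\<exists>k::nat. k \<ge> 1 \<and> int K = \<lfloor>real k * \<theta>\<rfloor> + int k)"

definition k1 :: "real \<Rightarrow> nat \<Rightarrow> nat" where
  "k1 \<theta> K = (THE k::nat. k \<ge> 1 \<and> int K = \<lfloor>real k * \<theta>\<rfloor> + int k)"

definition k2 :: "real \<Rightarrow> nat \<Rightarrow> nat" where
  "k2 \<theta> K = (THE k::nat. k \<ge> 1 \<and> int K = \<lfloor>real k / \<theta>\<rfloor> + int k)"

definition A :: "real \<Rightarrow> nat \<Rightarrow> nat" where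
  "A \<theta> K = (if first_kind \<theta> K then nat \<lfloor>real (k1 \<theta> K) * \<theta>\<rfloor> else k2 \<theta> K)"

definition B :: "real \<Rightarrow> nat \<Rightarrow> nat" where
  "B \<theta> K = (if first_kind \<theta> K then k1 \<theta> K else nat \<lfloor>real (k2 \<theta> K) / \<theta>\<rfloor>)"

definition N :: "real \<Rightarrow> nat \<Rightarrow> real set" where
  "N \<theta> K = {s \<in> Sth \<theta>. min (real (A \<theta> K)) (real (B \<theta> K) * \<theta>) \<le> s
                       \<and> s \<le> max (real (A \<theta> K)) (real (B \<theta> K) * \<theta>)}"

definition T :: "real \<Rightarrow> nat \<Rightarrow> real set" where
  "T \<theta> K = {s \<in> Sth \<theta>. Max (N \<theta> K) \<le> s \<and> s < Max (N \<theta> (K + 1))}"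

definition T' :: "real \<Rightarrow> nat \<Rightarrow> real set" where
  "T' \<theta> K = (\<lambda>s. real (A \<theta> K) + real (B \<theta> K) * \<theta> - s) ` T \<theta> K"

definition C :: "real \<Rightarrow> nat \<Rightarrow> real set" where
  "C \<theta> K = T' \<theta> K \<union> N \<theta> K \<union> T \<theta> K"

definition diffs :: "real list \<Rightarrow> real list" where
  "diffs xs = map (\<lambda>i. xs ! (i + 1) - xs ! i) [0..<length xs - 1]"

end

theory Submission
  imports Defs
begin


lemma Sth_iff: "x \<in> Sth th \<longleftrightarrow> (\<exists>i j::nat. x = real i + real j * th)"
  by (auto simp: Sth_def)

lemma Sth_fin:
  assumes "th > 1" shows "finite (Sth th \<inter> {..M})"
proof -
  let ?n = "nat \<lceil>M\<rceil>"
  have "Sth th \<inter> {..M} \<subseteq> (\<lambda>(i,j). real i + real j * th) ` ({..?n} \<times> {..?n})"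
  proof
    fix x assume "x \<in> Sth th \<inter> {..M}"
    then obtain i j :: nat where x: "x = real i + real j * th" and xm: "x \<le> M" by (auto simp: Sth_def)
    have "real j \<le> real j * th" using assms by (simp add: mult_le_cancel_left1)
    hence h1: "real i \<le> M" "real j \<le> M" using x xm assms
      by (smt (verit) mult_nonneg_nonneg of_nat_0_le_iff)+
    have "M \<le> real ?n" by (rule real_nat_ceiling_ge)
    hence "i \<le> ?n" "j \<le> ?n" using h1 by (simp_all add: of_nat_le_iff[symmetric] del: of_nat_le_iff) (linarith)+
    thus "x \<in> (\<lambda>(i,j). real i + real j * th) ` ({..?n} \<times> {..?n})" using x by force
  qed
  thus ?thesis by (rule finite_subset) auto
qed

definition cnt :: "real \<Rightarrow> real \<Rightarrow> int" where "cnt th x = \<lfloor>x\<rfloor> + \<lfloor>x / th\<rfloor>"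
definition pure :: "real \<Rightarrow> real \<Rightarrow> bool" where
  "pure th p = ((\<exists>n::nat. p = real n) \<or> (\<exists>m::nat. p = real m * th))"

lemma cnt_mono: "th > 0 \<Longrightarrow> x \<le> y \<Longrightarrow> cnt th x \<le> cnt th y"
  unfolding cnt_def by (intro add_mono floor_mono divide_right_mono) auto

lemma cnt_strict: assumes "th > 0" "x < y" "pure th y" shows "cnt th x < cnt th y"
proof -
  consider n::nat where "y = real n" | m::nat where "y = real m * th" using assms(3) pure_def by blast
  thus ?thesis
  proof cases
    case 1
    have "\<lfloor>x\<rfloor> < \<lfloor>y\<rfloor>" using 1 assms(2) by (simp add: floor_less_iff)
    moreover have "\<lfloor>x/th\<rfloor> \<le> \<lfloor>y/th\<rfloor>" using assms by (intro floor_mono divide_right_mono) auto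
    ultimately show ?thesis unfolding cnt_def by linarith
  next
    case 2
    have "\<lfloor>x\<rfloor> \<le> \<lfloor>y\<rfloor>" using assms by (intro floor_mono) auto
    moreover have "x/th < real m" using 2 assms by (simp add: divide_less_eq)
    hence "\<lfloor>x/th\<rfloor> < \<lfloor>y/th\<rfloor>" using 2 assms by (simp add: floor_less_iff)
    ultimately show ?thesis unfolding cnt_def by linarith
  qed
qed

lemma k1_prop: assumes "first_kind th K" "th > 0"
  shows "k1 th K \<ge> 1 \<and> int K = \<lfloor>real (k1 th K) * th\<rfloor> + int (k1 th K)"
proof -
  have mono: "\<lfloor>real k * th\<rfloor> + int k < \<lfloor>real k' * th\<rfloor> + int k'" if "k < k'" for k k' :: nat
  proof -
    have "\<lfloor>real k * th\<rfloor> \<le> \<lfloor>real k' * th\<rfloor>" using that assms(2) by (intro floor_mono mult_right_mono) auto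
    thus ?thesis using that by linarith
  qed
  have "\<exists>!k::nat. k \<ge> 1 \<and> int K = \<lfloor>real k * th\<rfloor> + int k"
  proof -
    obtain k :: nat where k: "k \<ge> 1 \<and> int K = \<lfloor>real k * th\<rfloor> + int k" using assms(1) first_kind_def by blast
    show ?thesis
    proof (rule ex1I[of _ k])
      fix k' assume k': "k' \<ge> 1 \<and> int K = \<lfloor>real k' * th\<rfloor> + int k'"
      show "k' = k" using mono[of k k'] mono[of k' k] k k' by (cases k k' rule: linorder_cases) auto
    qed (rule k)
  qed
  thus ?thesis unfolding k1_def by (rule theI')
qed

lemma k2_prop: assumes "\<exists>k::nat. k \<ge> 1 \<and> int K = \<lfloor>real k / th\<rfloor> + int k" "th > 0"
  shows "k2 th K \<ge> 1 \<and> int K = \<lfloor>real (k2 th K) / th\<rfloor> + int (k2 th K)"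
proof -
  have mono: "\<lfloor>real k / th\<rfloor> + int k < \<lfloor>real k' / th\<rfloor> + int k'" if "k < k'" for k k' :: nat
  proof -
    have "\<lfloor>real k / th\<rfloor> \<le> \<lfloor>real k' / th\<rfloor>" using that assms(2) by (intro floor_mono divide_right_mono) auto
    thus ?thesis using that by linarith
  qed
  have "\<exists>!k::nat. k \<ge> 1 \<and> int K = \<lfloor>real k / th\<rfloor> + int k"
  proof -
    obtain k :: nat where k: "k \<ge> 1 \<and> int K = \<lfloor>real k / th\<rfloor> + int k" using assms(1) by blast
    show ?thesis
    proof (rule ex1I[of _ k])
      fix k' assume k': "k' \<ge> 1 \<and> int K = \<lfloor>real k' / th\<rfloor> + int k'"
      show "k' = k" using mono[of k k'] mono[of k' k] k k' by (cases k k' rule: linorder_cases) auto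
    qed (rule k)
  qed
  thus ?thesis unfolding k2_def by (rule theI')
qed



lemma kinds: assumes "th \<notin> \<rat>" "th > 0" "K \<ge> 1"
  shows "first_kind th K \<or> (\<exists>k::nat. k \<ge> 1 \<and> int K = \<lfloor>real k / th\<rfloor> + int k)"
proof (cases "first_kind th K")
  case True thus ?thesis by simp
next
  case False
  hence nf: "\<not> first_kind th K" .
  define u where "u = real K / (1 + th)"
  define f where "f = \<lfloor>u\<rfloor>"
  have u0: "u \<ge> 0" using assms unfolding u_def by simp
  have uK: "u < real K" using assms unfolding u_def by (simp add: divide_less_eq)
  have f0: "f \<ge> 0" using u0 unfolding f_def by simp
  have fK: "f < int K" using uK unfolding f_def by linarith
  have fu: "real_of_int f \<le> u" "u < real_of_int f + 1" unfolding f_def by linarith+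
  define m where "m = nat (f + 1)"
  have mr: "real m = real_of_int f + 1" using f0 unfolding m_def by simp
  have m1: "m \<ge> 1" using f0 unfolding m_def by simp
  have "real m * (1 + th) > real K"
    using fu(2) mr assms(2) unfolding u_def by (simp add: divide_less_eq algebra_simps)
  hence gt: "real m * th + real m > real K" by (simp add: algebra_simps)
  have ne: "int K \<noteq> \<lfloor>real m * th\<rfloor> + int m" using nf m1 unfolding first_kind_def by blast
  have "\<lfloor>real m * th\<rfloor> + int m \<ge> int K" using gt by linarith
  hence "\<lfloor>real m * th\<rfloor> + int m \<ge> int K + 1" using ne by linarith
  hence ge: "real m * th + real m \<ge> real K + 1" by linarith
  have "real m * th + real m \<noteq> real K + 1"
  proof
    assume eq: "real m * th + real m = real K + 1"
    hence "th = (real K + 1 - real m) / real m" using m1 by (simp add: field_simps)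
    moreover have "(real K + 1 - real m) / real m \<in> \<rat>"
      by (intro Rats_divide Rats_diff Rats_add Rats_of_nat Rats_1)
    ultimately have "th \<in> \<rat>" by simp
    thus False using assms(1) by simp
  qed
  hence gt2: "real m * th + real m > real K + 1" using ge by simp
  define k where "k = nat (int K - f)"
  have kr: "real k = real K - real_of_int f" using fK unfolding k_def by simp
  have k1: "k \<ge> 1" using fK unfolding k_def by simp
  have a: "real_of_int f \<le> real k / th"
    using fu(1) kr assms(2) unfolding u_def by (simp add: field_simps)
  have b: "real k / th < real_of_int f + 1"
    using gt2 kr mr assms(2) by (simp add: field_simps)
  have "\<lfloor>real k / th\<rfloor> = f" using a b by linarith
  hence "int K = \<lfloor>real k / th\<rfloor> + int k" using fK unfolding k_def by simp
  with k1 show ?thesis by blast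
qed

lemma Max_N: assumes "th > 1" shows "Max (N th K) = max (real (A th K)) (real (B th K) * th)"
proof (rule Max_eqI)
  show "finite (N th K)"
    by (rule finite_subset[OF _ Sth_fin[OF assms, of "max (real (A th K)) (real (B th K) * th)"]])
       (auto simp: N_def)
  have "real (A th K) \<in> Sth th" unfolding Sth_iff by (rule exI[of _ "A th K"], rule exI[of _ 0]) simp
  moreover have "real (B th K) * th \<in> Sth th" unfolding Sth_iff by (rule exI[of _ 0], rule exI[of _ "B th K"]) simp
  ultimately show "max (real (A th K)) (real (B th K) * th) \<in> N th K"
    unfolding N_def by (auto simp: max_def)
qed (auto simp: N_def)



lemma AB_prop: assumes "th \<notin> \<rat>" "1 < th" "K \<ge> 1"
  defines "P \<equiv> max (real (A th K)) (real (B th K) * th)"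
  shows "cnt th P = int K \<and> pure th P \<and> (\<forall>i::nat. real i > real (A th K) \<longrightarrow> real i > P)
     \<and> (\<forall>j::nat. j > B th K \<longrightarrow> real j * th > P)"
proof -
  have th0: "th > 0" using assms by simp
  show ?thesis
  proof (cases "first_kind th K")
    case True
    define k where "k = k1 th K"
    have k: "k \<ge> 1" "int K = \<lfloor>real k * th\<rfloor> + int k" using k1_prop[OF True th0] unfolding k_def by auto
    have fl0: "\<lfloor>real k * th\<rfloor> \<ge> 0" using th0 by simp
    have Ar: "real (A th K) = real_of_int \<lfloor>real k * th\<rfloor>" using True fl0 unfolding A_def k_def by simp
    have Br: "B th K = k" using True unfolding B_def k_def by simp
    have Pk: "P = real k * th" unfolding P_def Ar Br by (simp add: max_def)
    have c: "cnt th P = int K" unfolding Pk cnt_def using th0 k by simp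
    have p: "pure th P" unfolding Pk pure_def by blast
    have i: "real i > P" if "real i > real (A th K)" for i :: nat
    proof -
      have "int i \<ge> \<lfloor>real k * th\<rfloor> + 1" using that Ar by linarith
      thus ?thesis unfolding Pk by linarith
    qed
    have j: "real j * th > P" if "j > B th K" for j :: nat
      unfolding Pk using that Br th0 by simp
    show ?thesis using c p i j by blast
  next
    case False
    hence ex: "\<exists>k::nat. k \<ge> 1 \<and> int K = \<lfloor>real k / th\<rfloor> + int k" using kinds[OF assms(1) th0 assms(3)] by blast
    define k where "k = k2 th K"
    have k: "k \<ge> 1" "int K = \<lfloor>real k / th\<rfloor> + int k" using k2_prop[OF ex th0] unfolding k_def by auto
    have fl0: "\<lfloor>real k / th\<rfloor> \<ge> 0" using th0 by simp
    have Ar: "A th K = k" using False unfolding A_def k_def by simp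
    have Br: "real (B th K) = real_of_int \<lfloor>real k / th\<rfloor>" using False fl0 unfolding B_def k_def by simp
    have "real_of_int \<lfloor>real k / th\<rfloor> * th \<le> real k"
      using th0 by (metis floor_divide_lower)
    hence Pk: "P = real k" unfolding P_def Ar Br by (simp add: max_def)
    have c: "cnt th P = int K" unfolding Pk cnt_def using th0 k by simp
    have p: "pure th P" unfolding Pk pure_def by blast
    have i: "real i > P" if "real i > real (A th K)" for i :: nat
      unfolding Pk using that Ar by simp
    have j: "real j * th > P" if "j > B th K" for j :: nat
    proof -
      have "real j \<ge> real_of_int \<lfloor>real k / th\<rfloor> + 1" using that Br by linarith
      hence "real j > real k / th" by linarith
      thus ?thesis unfolding Pk using th0 by (simp add: divide_less_eq)
    qed
    show ?thesis using c p i j by blast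
  qed
qed



lemma pal: fixes X :: "real set"
  assumes fin: "finite X" and sym: "\<forall>x\<in>X. c - x \<in> X"
  shows "rev (diffs (sorted_list_of_set X)) = diffs (sorted_list_of_set X)"
proof -
  define xs where "xs = sorted_list_of_set X"
  define n where "n = length xs"
  have sx: "sorted xs" "distinct xs" "set xs = X" using fin unfolding xs_def by auto
  have img: "(\<lambda>x. c - x) ` X = X"
  proof
    show "(\<lambda>x. c - x) ` X \<subseteq> X" using sym by auto
    show "X \<subseteq> (\<lambda>x. c - x) ` X"
    proof
      fix x assume "x \<in> X" thus "x \<in> (\<lambda>x. c - x) ` X" using sym by (intro image_eqI[of _ _ "c - x"]) auto
    qed
  qed
  define ys where "ys = rev (map (\<lambda>x. c - x) xs)"
  have "sorted ys" unfolding ys_def sorted_wrt_rev sorted_wrt_map using sx(1)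
    by (auto elim: sorted_wrt_mono_rel[rotated])
  moreover have "distinct ys" unfolding ys_def using sx(2) by (simp add: distinct_map inj_on_def)
  moreover have "set ys = X" unfolding ys_def using sx(3) img by simp
  ultimately have eq: "ys = xs" using sx by (metis sorted_distinct_set_unique)
  have nth: "xs ! i = c - xs ! (n - 1 - i)" if "i < n" for i
  proof -
    have "xs ! i = ys ! i" using eq by simp
    also have "\<dots> = c - xs ! (n - 1 - i)" unfolding ys_def using that n_def
      by (simp add: rev_nth)
    finally show ?thesis .
  qed
  show ?thesis unfolding xs_def[symmetric]
  proof (rule nth_equalityI)
    show "length (rev (diffs xs)) = length (diffs xs)" by simp
    fix i assume "i < length (rev (diffs xs))"
    hence i: "i < n - 1" unfolding diffs_def n_def by simp
    have "rev (diffs xs) ! i = diffs xs ! (n - 2 - i)" using i unfolding diffs_def n_def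
      by (simp add: rev_nth)
    also have "\<dots> = xs ! (n - 1 - i) - xs ! (n - 2 - i)"
    proof -
      have a: "0 + (n - 2 - i) < n - 1" using i by simp
      have b: "n - 2 - i + 1 = n - 1 - i" using i by simp
      show ?thesis unfolding diffs_def n_def[symmetric] using nth_upt[OF a] a b
        by (simp del: nth_upt add: n_def)
    qed
    also have "\<dots> = (c - xs ! i) - (c - xs ! (i + 1))"
      using nth[of i] nth[of "i+1"] i by (simp add: numeral_2_eq_2 Suc_diff_Suc)
    also have "\<dots> = diffs xs ! i" using i unfolding diffs_def n_def by simp
    finally show "rev (diffs xs) ! i = diffs xs ! i" .
  qed
qed



theorem lemma10:
  fixes \<theta> :: real and K :: nat
  assumes "\<theta> \<notin> \<rat>" and "1 < \<theta>" and "\<theta> < 2" and "K \<ge> 1"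
  shows "T' \<theta> K \<subseteq> Sth \<theta>
    \<and> finite (C \<theta> K)
    \<and> C \<theta> K = Sth \<theta> \<inter> {Min (C \<theta> K) .. Max (C \<theta> K)}
    \<and> (\<forall>s \<in> C \<theta> K. real (A \<theta> K) + real (B \<theta> K) * \<theta> - s \<in> C \<theta> K)
    \<and> rev (diffs (sorted_list_of_set (C \<theta> K))) = diffs (sorted_list_of_set (C \<theta> K))"
proof -
  have th0: "\<theta> > 0" using assms by simp
  define a where "a = real (A \<theta> K)"
  define b where "b = real (B \<theta> K) * \<theta>"
  define c where "c = a + b"
  define P where "P = max a b"
  define Q where "Q = min a b"
  define U where "U = Max (N \<theta> (K+1))"
  have PN: "Max (N \<theta> K) = P" using Max_N[OF assms(2)] unfolding P_def a_def b_def .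
  have UN: "U = max (real (A \<theta> (K+1))) (real (B \<theta> (K+1)) * \<theta>)" using Max_N[OF assms(2)] unfolding U_def .
  have ABK: "cnt \<theta> P = int K" "pure \<theta> P" "\<forall>i::nat. real i > a \<longrightarrow> real i > P"
     "\<forall>j::nat. j > B \<theta> K \<longrightarrow> real j * \<theta> > P"
    using AB_prop[OF assms(1,2,4)] unfolding P_def a_def b_def by auto
  have ABK1: "cnt \<theta> U = int K + 1" "pure \<theta> U"
    using AB_prop[OF assms(1,2), of "K+1"] unfolding UN[symmetric] by auto
  have PU: "P < U"
  proof (rule ccontr)
    assume "\<not> P < U"
    hence "cnt \<theta> U \<le> cnt \<theta> P" using cnt_mono[OF th0] by simp
    thus False using ABK(1) ABK1(1) by simp
  qed
  have QP: "Q \<le> P" and cQP: "c = Q + P" unfolding Q_def P_def c_def by auto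
  have key: "\<exists>i j::nat. s = real i + real j * \<theta> \<and> i \<le> A \<theta> K \<and> j \<le> B \<theta> K"
    if sS: "s \<in> Sth \<theta>" and sU: "s < U" for s
  proof -
    obtain i j :: nat where s: "s = real i + real j * \<theta>" using sS Sth_iff by blast
    have ile: "real i \<le> s" "real j * \<theta> \<le> s" using s th0 by simp_all
    have "i \<le> A \<theta> K"
    proof (rule ccontr)
      assume "\<not> i \<le> A \<theta> K"
      hence "real i > P" using ABK(3) unfolding a_def by simp
      hence "cnt \<theta> P < cnt \<theta> (real i)" using cnt_strict[OF th0] pure_def by blast
      moreover have "cnt \<theta> (real i) < cnt \<theta> U" using cnt_strict[OF th0 _ ABK1(2)] ile sU by simp
      ultimately show False using ABK(1) ABK1(1) by simp
    qed
    moreover have "j \<le> B \<theta> K"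
    proof (rule ccontr)
      assume "\<not> j \<le> B \<theta> K"
      hence "real j * \<theta> > P" using ABK(4) by simp
      hence "cnt \<theta> P < cnt \<theta> (real j * \<theta>)" using cnt_strict[OF th0] pure_def by blast
      moreover have "cnt \<theta> (real j * \<theta>) < cnt \<theta> U" using cnt_strict[OF th0 _ ABK1(2)] ile sU by simp
      ultimately show False using ABK(1) ABK1(1) by simp
    qed
    ultimately show ?thesis using s by blast
  qed
  define W where "W = {s \<in> Sth \<theta>. c - U < s \<and> s < U}"
  have Winv: "c - s \<in> W" if "s \<in> W" for s
  proof -
    have s: "s \<in> Sth \<theta>" "c - U < s" "s < U" using that unfolding W_def by auto
    obtain i j :: nat where ij: "s = real i + real j * \<theta>" "i \<le> A \<theta> K" "j \<le> B \<theta> K"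
      using key[OF s(1) s(3)] by blast
    have "c - s = real (A \<theta> K - i) + real (B \<theta> K - j) * \<theta>"
      using ij unfolding c_def a_def b_def by (simp add: of_nat_diff algebra_simps)
    hence "c - s \<in> Sth \<theta>" unfolding Sth_iff by blast
    thus ?thesis using s unfolding W_def by auto
  qed
  have T_sub: "T \<theta> K \<subseteq> W"
  proof
    fix t assume "t \<in> T \<theta> K"
    hence t: "t \<in> Sth \<theta>" "P \<le> t" "t < U" unfolding T_def PN U_def by auto
    thus "t \<in> W" unfolding W_def using PU QP cQP by auto
  qed
  have N_sub: "N \<theta> K \<subseteq> W"
  proof
    fix t assume "t \<in> N \<theta> K"
    hence t: "t \<in> Sth \<theta>" "Q \<le> t" "t \<le> P" unfolding N_def P_def Q_def a_def b_def by auto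
    thus "t \<in> W" unfolding W_def using PU QP cQP by auto
  qed
  have cc: "real (A \<theta> K) + real (B \<theta> K) * \<theta> = c" unfolding c_def a_def b_def ..
  have T'_sub: "T' \<theta> K \<subseteq> W" unfolding T'_def cc using T_sub Winv by auto
  have W_sub: "W \<subseteq> C \<theta> K"
  proof
    fix x assume x: "x \<in> W"
    hence xs: "x \<in> Sth \<theta>" "c - U < x" "x < U" unfolding W_def by auto
    show "x \<in> C \<theta> K"
    proof (cases "P \<le> x")
      case True thus ?thesis using xs unfolding C_def T_def PN U_def by auto
    next
      case False
      show ?thesis
      proof (cases "Q \<le> x")
        case True thus ?thesis using xs False unfolding C_def N_def P_def Q_def a_def b_def by auto
      next
        case F2: False
        have "c - x \<in> W" by (rule Winv[OF x])
        hence "c - x \<in> T \<theta> K" using F2 cQP unfolding W_def T_def PN U_def by auto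
        hence "c - (c - x) \<in> T' \<theta> K" unfolding T'_def cc by blast
        thus ?thesis unfolding C_def by simp
      qed
    qed
  qed
  have CW: "C \<theta> K = W" using W_sub T'_sub N_sub T_sub unfolding C_def by auto
  have finW: "finite W"
    by (rule finite_subset[OF _ Sth_fin[OF assms(2), of U]]) (auto simp: W_def)
  have "a \<in> Sth \<theta>" unfolding Sth_iff a_def by (rule exI[of _ "A \<theta> K"], rule exI[of _ 0]) simp
  moreover have "b \<in> Sth \<theta>" unfolding Sth_iff b_def by (rule exI[of _ 0], rule exI[of _ "B \<theta> K"]) simp
  ultimately have "P \<in> Sth \<theta>" unfolding P_def by (simp add: max_def)
  hence PinN: "P \<in> N \<theta> K" unfolding N_def using QP by (simp add: P_def Q_def a_def b_def)
  have ne: "W \<noteq> {}" using PinN N_sub by auto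
  have blk: "W = Sth \<theta> \<inter> {Min W .. Max W}"
  proof
    show "W \<subseteq> Sth \<theta> \<inter> {Min W .. Max W}" using finW unfolding W_def by auto
    show "Sth \<theta> \<inter> {Min W .. Max W} \<subseteq> W"
    proof
      fix x assume x: "x \<in> Sth \<theta> \<inter> {Min W .. Max W}"
      have "Min W \<in> W" "Max W \<in> W" using finW ne by auto
      thus "x \<in> W" using x unfolding W_def by auto
    qed
  qed
  have refl: "\<forall>s \<in> W. real (A \<theta> K) + real (B \<theta> K) * \<theta> - s \<in> W" using Winv cc by simp
  have W_S: "W \<subseteq> Sth \<theta>" unfolding W_def by auto
  show ?thesis unfolding CW using T'_sub W_S finW blk refl pal[OF finW, of c] Winv by blast
qed


end
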